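(* Let $X$ be a GOGAm triangle of size $n$. (i) For $1\leq k\leq n$, the triangle obtained from $X$ by replacing every entry $X_{i,j}$ with $n\geq i\geq j+k$ by $1$ is a GOGAm triangle. (ii) Let $n\geq m\geq k\geq 1$. Suppose that for every $i\geq m+1$ the partial SW–NE diagonal $(X_{i+l,k+l})_{0\leq l\leq n-i}$ is constant. Then the triangle obtained from $X$ by replacing the entries $X_{m+l,k+l}$, $1\leq l\leq n-m$, by $X_{m,k}$ is a GOGAm triangle.
   Context: A Gelfand–Tsetlin triangle of size $n$ is an array $X=(X_{i,j})_{n\geq i\geq j\geq 1}$ of positive integers (row $n$ is the top row, row $1$ the bottom) with $X_{i+1,j}\leq X_{i,j}\leq X_{i+1,j+1}$ for all $n-1\geq i\geq j\geq 1$. A Magog triangle of size $n$ is a Gelfand–Tsetlin triangle with $X_{j,j}\leq j$ for all $j$. For $1\leq k\leq n-1$, $s_k$ changes only row $k$, replacing $X_{k,j}$ by $\max(X_{k+1,j},X_{k-1,j-1})+\min(X_{k+1,j+1},X_{k-1,j})-X_{k,j}$ (terms outside the triangle omitted); $\omega_j=s_j\circ\cdots\circ s_1$, $S=\omega_1\circ\cdots\circ\omega_{n-1}$. A GOGAm triangle of size $n$ is a Gelfand–Tsetlin triangle $X$ with $S(X)$ a Magog triangle. (Equivalently, by a known result, $X_{n,n}\leq n$ and for all $1\leq k\leq n-1$ and all $n=j_0>\dots>j_{n-k}\geq 1$: $\sum_{i=0}^{n-k-1}(X_{j_i+i,j_i}-X_{j_{i+1}+i,j_{i+1}})+X_{j_{n-k}+n-k,j_{n-k}}\leq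 k$.) *)

theory Defs
  imports Main
begin

text \<open>A triangle of size n is a function X :: nat => nat => int, where only the entries
  X i j with n >= i >= j >= 1 are meaningful (row n is the top row).\<close>

definition in_tri :: "nat \<Rightarrow> nat \<Rightarrow> nat \<Rightarrow> bool" where
  "in_tri n i j \<longleftrightarrow> 1 \<le> j \<and> j \<le> i \<and> i \<le> n"

definition GT_triangle :: "nat \<Rightarrow> (nat \<Rightarrow> nat \<Rightarrow> int) \<Rightarrow> bool" where
  "GT_triangle n X \<longleftrightarrow>
     (\<forall>i j. in_tri n i j \<longrightarrow> X i j \<ge> 1) \<and>
     (\<forall>i j. 1 \<le> j \<and> j \<le> i \<and> i + 1 \<le> n \<longrightarrow>
        X (i+1) j \<le> X i j \<and> X i j \<le> X (i+1) (j+1))"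

definition Magog_triangle :: "nat \<Rightarrow> (nat \<Rightarrow> nat \<Rightarrow> int) \<Rightarrow> bool" where
  "Magog_triangle n X \<longleftrightarrow> GT_triangle n X \<and> (\<forall>j. 1 \<le> j \<and> j \<le> n \<longrightarrow> X j j \<le> int j)"

text \<open>The local toggle s_k (for 1 <= k <= n-1): changes only row k; terms outside the
  triangle are omitted from max/min. X (k-1) (j-1) exists iff j >= 2, X (k-1) j exists iff j <= k-1.\<close>

definition s_op :: "nat \<Rightarrow> (nat \<Rightarrow> nat \<Rightarrow> int) \<Rightarrow> (nat \<Rightarrow> nat \<Rightarrow> int)" where
  "s_op k X = (\<lambda>i j.
     if i = k \<and> 1 \<le> j \<and> j \<le> k then
       (if 2 \<le> j then max (X (k+1) j) (X (k-1) (j-1)) else X (k+1) j)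
       + (if j + 1 \<le> k then min (X (k+1) (j+1)) (X (k-1) j) else X (k+1) (j+1))
       - X k j
     else X i j)"

fun omega_op :: "nat \<Rightarrow> (nat \<Rightarrow> nat \<Rightarrow> int) \<Rightarrow> (nat \<Rightarrow> nat \<Rightarrow> int)" where
  "omega_op 0 = id"
| "omega_op (Suc j) = s_op (Suc j) \<circ> omega_op j"

fun S_aux :: "nat \<Rightarrow> (nat \<Rightarrow> nat \<Rightarrow> int) \<Rightarrow> (nat \<Rightarrow> nat \<Rightarrow> int)" where
  "S_aux 0 = id"
| "S_aux (Suc m) = S_aux m \<circ> omega_op (Suc m)"

definition S_op :: "nat \<Rightarrow> (nat \<Rightarrow> nat \<Rightarrow> int) \<Rightarrow> (nat \<Rightarrow> nat \<Rightarrow> int)" where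
  "S_op n = S_aux (n - 1)"

definition GOGAm_triangle :: "nat \<Rightarrow> (nat \<Rightarrow> nat \<Rightarrow> int) \<Rightarrow> bool" where
  "GOGAm_triangle n X \<longleftrightarrow> GT_triangle n X \<and> Magog_triangle n (S_op n X)"

end

theory Submission
  imports Defs
begin

definition MR :: "(nat \<Rightarrow> int) \<Rightarrow> nat \<Rightarrow> nat \<Rightarrow> int" where
  "MR f lo t = Max (f ` {lo..t})"

lemma MR_single[simp]: "MR f lo lo = f lo"
  by (simp add: MR_def)

lemma MR_Suc: "lo \<le> t \<Longrightarrow> MR f lo (Suc t) = max (MR f lo t) (f (Suc t))"
proof -
  assume h: "lo \<le> t"
  have "{lo..Suc t} = insert (Suc t) {lo..t}" using h by auto
  hence "MR f lo (Suc t) = Max (insert (f (Suc t)) (f ` {lo..t}))" by (simp add: MR_def)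
  also have "\<dots> = max (f (Suc t)) (Max (f ` {lo..t}))"
    using h by (intro Max_insert) auto
  finally show ?thesis by (simp add: MR_def max.commute)
qed

lemma MR_ge: "lo \<le> a \<Longrightarrow> a \<le> t \<Longrightarrow> f a \<le> MR f lo t"
  unfolding MR_def by (rule Max_ge) auto

lemma MR_ex: "lo \<le> t \<Longrightarrow> \<exists>a. lo \<le> a \<and> a \<le> t \<and> MR f lo t = f a"
proof -
  assume "lo \<le> t"
  hence "Max (f ` {lo..t}) \<in> f ` {lo..t}" by (intro Max_in) auto
  thus ?thesis unfolding MR_def by auto
qed

lemma MR_cong: "(\<And>a. lo \<le> a \<Longrightarrow> a \<le> t \<Longrightarrow> f a = g a) \<Longrightarrow> MR f lo t = MR g lo t"
  unfolding MR_def by (metis atLeastAtMost_iff image_cong)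

lemma MR_shift: "MR f (Suc lo) (Suc t) = MR (\<lambda>b. f (Suc b)) lo t"
proof -
  have "f ` {Suc lo..Suc t} = (\<lambda>b. f (Suc b)) ` {lo..t}"
    by (metis image_Suc_atLeastAtMost image_image)
  thus ?thesis by (simp add: MR_def)
qed

fun Mw :: "(nat \<Rightarrow> nat \<Rightarrow> int) \<Rightarrow> nat \<Rightarrow> nat \<Rightarrow> int" where
  "Mw w 0 j = 0"
| "Mw w (Suc d) j = MR (\<lambda>a. w (Suc d) a + Mw w d a) 1 j"

fun PM :: "(nat \<Rightarrow> nat \<Rightarrow> int) \<Rightarrow> nat \<Rightarrow> nat \<Rightarrow> nat \<Rightarrow> int" where
  "PM w m 0 c = 0"
| "PM w m (Suc r) c = MR (\<lambda>a. w (Suc m) a + PM w (Suc m) r (a - 1)) (Suc r) c"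

lemma Mw_one: "Mw w (Suc d) (Suc 0) = w (Suc d) 1 + Mw w d 1"
  by simp

lemma Mw_Suc: "1 \<le> j \<Longrightarrow> Mw w (Suc d) (Suc j) = max (Mw w (Suc d) j) (w (Suc d) (Suc j) + Mw w d (Suc j))"
  by (simp add: MR_Suc)

definition dT :: "(nat \<Rightarrow> nat \<Rightarrow> int) \<Rightarrow> nat \<Rightarrow> nat \<Rightarrow> int" where
  "dT w i b = w i (b+1) + Mw w (i+1) b - Mw w i (b+1) - Mw w i b + Mw w (i-1) (b+1)"

lemma arith_step:
  fixes mT1 mT2 e W R P1 P2 q1 q2 Q2 W' R' :: int
  assumes "mT1 + W = R" "max R P1 = mT1 + q1" "W' = max W (e - mT2 - mT1 + P1)"
    "R' = max R (e + q1)" "P2 = max P1 (mT2 + Q2)" "q2 = max q1 Q2" "mT2 = max mT1 e"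
  shows "mT2 + W' = R' \<and> max R' P2 = mT2 + q2"
  using assms unfolding max_def by (auto split: if_splits)

lemma seq_lemma:
  fixes e m Q :: "nat \<Rightarrow> int" and lo :: nat
  assumes lo: "1 \<le> lo"
    and mrec: "\<And>c. lo \<le> c \<Longrightarrow> m (Suc c) = max (m c) (e (Suc c))"
  shows "lo \<le> t \<Longrightarrow>
    m (Suc t) + MR (\<lambda>b. e (Suc b) - m (Suc b) - m b + MR (\<lambda>a. m a + Q a) lo b) lo t
       = MR (\<lambda>b. e (Suc b) + MR Q lo b) lo t
    \<and> max (MR (\<lambda>b. e (Suc b) + MR Q lo b) lo t) (MR (\<lambda>a. m a + Q a) lo (Suc t))
       = m (Suc t) + MR Q lo (Suc t)"
proof (induction t rule: dec_induct)
  case base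
  have "m (Suc lo) = max (m lo) (e (Suc lo))" using mrec by simp
  moreover have "MR (\<lambda>a. m a + Q a) lo (Suc lo) = max (m lo + Q lo) (m (Suc lo) + Q (Suc lo))"
    by (simp add: MR_Suc)
  moreover have "MR Q lo (Suc lo) = max (Q lo) (Q (Suc lo))" by (simp add: MR_Suc)
  ultimately show ?case by (simp add: max_def)
next
  case (step t)
  let ?W = "MR (\<lambda>b. e (Suc b) - m (Suc b) - m b + MR (\<lambda>a. m a + Q a) lo b) lo"
  let ?R = "MR (\<lambda>b. e (Suc b) + MR Q lo b) lo"
  let ?P = "MR (\<lambda>a. m a + Q a) lo"
  have W: "?W (Suc t) = max (?W t) (e (Suc (Suc t)) - m (Suc (Suc t)) - m (Suc t) + ?P (Suc t))"
    using step.hyps by (simp add: MR_Suc)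
  have R: "?R (Suc t) = max (?R t) (e (Suc (Suc t)) + MR Q lo (Suc t))"
    using step.hyps by (simp add: MR_Suc)
  have P: "?P (Suc (Suc t)) = max (?P (Suc t)) (m (Suc (Suc t)) + Q (Suc (Suc t)))"
    using step.hyps by (simp add: MR_Suc)
  have q: "MR Q lo (Suc (Suc t)) = max (MR Q lo (Suc t)) (Q (Suc (Suc t)))"
    using step.hyps by (simp add: MR_Suc)
  have mm: "m (Suc (Suc t)) = max (m (Suc t)) (e (Suc (Suc t)))"
    using mrec step.hyps by simp
  show ?case using arith_step[OF step.IH[THEN conjunct1] step.IH[THEN conjunct2] W R P q mm] .
qed

lemma claim:
  "\<forall>k t. Suc s \<le> t \<longrightarrow> Mw w (Suc k) t + PM (dT w) k s (t - 1)
     = MR (\<lambda>a. w (Suc k) a + Mw w k a + PM w (Suc k) s (a - 1)) (Suc s) t"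
proof (induction s)
  case 0
  show ?case by simp
next
  case (Suc s)
  show ?case
  proof (intro allI impI)
    fix k t assume ht: "Suc (Suc s) \<le> t"
    then obtain T where tT: "t = Suc T" and hT: "Suc s \<le> T" by (cases t) auto
    define e where "e c = w (Suc k) c + Mw w k c" for c
    define m where "m c = Mw w (Suc k) c" for c
    define Q where "Q a = w (Suc (Suc k)) a + PM w (Suc (Suc k)) s (a - 1)" for a
    have mrec: "\<And>c. Suc s \<le> c \<Longrightarrow> m (Suc c) = max (m c) (e (Suc c))"
    proof -
      fix c assume "Suc s \<le> c"
      thus "m (Suc c) = max (m c) (e (Suc c))" unfolding m_def e_def by (intro Mw_Suc) simp
    qed
    have "PM (dT w) k (Suc s) (t - 1) = MR (\<lambda>b. dT w (Suc k) b + PM (dT w) (Suc k) s (b - 1)) (Suc s) T"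
      using tT by simp
    also have "\<dots> = MR (\<lambda>b. e (Suc b) - m (Suc b) - m b + MR (\<lambda>a. m a + Q a) (Suc s) b) (Suc s) T"
    proof (rule MR_cong)
      fix b assume b: "Suc s \<le> b" "b \<le> T"
      have ih: "Mw w (Suc (Suc k)) b + PM (dT w) (Suc k) s (b - 1)
        = MR (\<lambda>a. w (Suc (Suc k)) a + Mw w (Suc k) a + PM w (Suc (Suc k)) s (a - 1)) (Suc s) b"
        using Suc.IH b by blast
      have "MR (\<lambda>a. w (Suc (Suc k)) a + Mw w (Suc k) a + PM w (Suc (Suc k)) s (a - 1)) (Suc s) b
          = MR (\<lambda>a. m a + Q a) (Suc s) b"
        unfolding m_def Q_def by (rule MR_cong) simp
      with ih show "dT w (Suc k) b + PM (dT w) (Suc k) s (b - 1) =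
          e (Suc b) - m (Suc b) - m b + MR (\<lambda>a. m a + Q a) (Suc s) b"
        unfolding dT_def e_def m_def by simp
    qed
    finally have L: "PM (dT w) k (Suc s) (t - 1) = MR (\<lambda>b. e (Suc b) - m (Suc b) - m b + MR (\<lambda>a. m a + Q a) (Suc s) b) (Suc s) T" .
    have "MR (\<lambda>a. w (Suc k) a + Mw w k a + PM w (Suc k) (Suc s) (a - 1)) (Suc (Suc s)) t
        = MR (\<lambda>b. w (Suc k) (Suc b) + Mw w k (Suc b) + PM w (Suc k) (Suc s) b) (Suc s) T"
      using tT by (simp add: MR_shift)
    also have "\<dots> = MR (\<lambda>b. e (Suc b) + MR Q (Suc s) b) (Suc s) T"
      unfolding e_def Q_def by simp
    finally have R: "MR (\<lambda>a. w (Suc k) a + Mw w k a + PM w (Suc k) (Suc s) (a - 1)) (Suc (Suc s)) t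
        = MR (\<lambda>b. e (Suc b) + MR Q (Suc s) b) (Suc s) T" .
    have "m (Suc T) + MR (\<lambda>b. e (Suc b) - m (Suc b) - m b + MR (\<lambda>a. m a + Q a) (Suc s) b) (Suc s) T
        = MR (\<lambda>b. e (Suc b) + MR Q (Suc s) b) (Suc s) T"
      using seq_lemma[of "Suc s" m e T Q] mrec hT by auto
    thus "Mw w (Suc k) t + PM (dT w) k (Suc s) (t - 1) =
         MR (\<lambda>a. w (Suc k) a + Mw w k a + PM w (Suc k) (Suc s) (a - 1)) (Suc (Suc s)) t"
      using L R tT unfolding m_def by simp
  qed
qed

lemma lemmaA:
  assumes "Suc s \<le> t"
  shows "Mw w 1 t + PM (dT w) 0 s (t - 1) = PM w 0 (Suc s) t"
proof -
  have "Mw w 1 t + PM (dT w) 0 s (t - 1) = MR (\<lambda>a. w (Suc 0) a + Mw w 0 a + PM w (Suc 0) s (a - 1)) (Suc s) t"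
    using claim[of s w] assms by (simp only: One_nat_def)
  thus ?thesis by simp
qed

declare Mw.simps(2)[simp del]

definition dl :: "(nat \<Rightarrow> nat \<Rightarrow> int) \<Rightarrow> nat \<Rightarrow> nat \<Rightarrow> int" where
  "dl X i a = X (a + i) a - X (a + i - 1) a"

lemma omega_formula:
  "omega_op m X i j = (if 1 \<le> j \<and> j \<le> i \<and> i \<le> m
     then X (i+1) (j+1) + Mw (dl X) (i - j + 1) j - Mw (dl X) (i - j) (j+1) else X i j)"
proof (induction m arbitrary: i j)
  case 0
  show ?case by simp
next
  case (Suc m)
  define Z where "Z = omega_op m X"
  have IH: "\<And>i j. Z i j = (if 1 \<le> j \<and> j \<le> i \<and> i \<le> m
     then X (i+1) (j+1) + Mw (dl X) (i - j + 1) j - Mw (dl X) (i - j) (j+1) else X i j)"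
    unfolding Z_def by (rule Suc.IH)
  have om: "omega_op (Suc m) X = s_op (Suc m) Z" by (simp add: Z_def)
  show ?case
  proof (cases "i = Suc m \<and> 1 \<le> j \<and> j \<le> Suc m")
    case False
    hence "omega_op (Suc m) X i j = Z i j" unfolding om s_op_def by auto
    thus ?thesis using False IH[of i j] by auto
  next
    case True
    hence i: "i = Suc m" and j1: "1 \<le> j" and jm: "j \<le> Suc m" by auto
    have v: "omega_op (Suc m) X i j =
       (if 2 \<le> j then max (X (m+2) j) (Z m (j-1)) else X (m+2) j)
       + (if j + 1 \<le> Suc m then min (X (m+2) (j+1)) (Z m j) else X (m+2) (j+1))
       - X (m+1) j"
      unfolding om s_op_def using True IH by simp
    show ?thesis
    proof (cases "j = 1")
      case j: True
      show ?thesis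
      proof (cases "m = 0")
        case True
        have "Mw (dl X) 1 1 = dl X 1 1" by (simp add: Mw.simps)
        thus ?thesis using v i j True by (simp add: dl_def)
      next
        case False
        then obtain D where mD: "m = Suc D" by (cases m) auto
        have Zm1: "Z m 1 = X (m+1) 2 + Mw (dl X) (Suc D) 1 - Mw (dl X) D 2"
          using IH[of m 1] mD by (simp add: numeral_2_eq_2)
        have r1: "Mw (dl X) (Suc (Suc D)) 1 = dl X (Suc (Suc D)) 1 + Mw (dl X) (Suc D) 1" by (simp add: Mw.simps)
        have r2: "Mw (dl X) (Suc D) 2 = max (Mw (dl X) (Suc D) 1) (dl X (Suc D) 2 + Mw (dl X) D 2)"
          using Mw_Suc[of 1 "dl X" D] by (simp add: numeral_2_eq_2)
        have d1: "dl X (Suc (Suc D)) 1 = X (m+2) 1 - X (m+1) 1" using mD by (simp add: dl_def)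
        have d2: "dl X (Suc D) 2 = X (m+2) 2 - X (m+1) 2" using mD by (simp add: dl_def)
        have "omega_op (Suc m) X i j = X (m+2) 1 + min (X (m+2) 2) (Z m 1) - X (m+1) 1"
          using v j mD by (simp add: numeral_2_eq_2)
        also have "\<dots> = X (i+1) (j+1) + Mw (dl X) (i - j + 1) j - Mw (dl X) (i - j) (j+1)"
          using Zm1 r1 r2 d1 d2 i j mD unfolding min_def max_def by (simp add: numeral_2_eq_2 split: if_splits)
        finally show ?thesis using True by simp
      qed
    next
      case jn1: False
      then obtain j' where jj: "j = Suc j'" and j'1: "1 \<le> j'" using j1 by (cases j) auto
      show ?thesis
      proof (cases "j = Suc m")
        case jS: True
        have Zmm: "Z m m = X (m+1) (m+1) + Mw (dl X) 1 m"
          using IH[of m m] jj jS j'1 by simp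
        have r: "Mw (dl X) 1 (Suc m) = max (Mw (dl X) 1 m) (dl X 1 (Suc m))"
          using Mw_Suc[of m "dl X" 0] jj jS j'1 by simp
        have d: "dl X 1 (Suc m) = X (m+2) (m+1) - X (m+1) (m+1)" by (simp add: dl_def)
        have "omega_op (Suc m) X i j = max (X (m+2) (m+1)) (Z m m) + X (m+2) (m+2) - X (m+1) (m+1)"
          using v jS jj j'1 by simp
        also have "\<dots> = X (i+1) (j+1) + Mw (dl X) (i - j + 1) j - Mw (dl X) (i - j) (j+1)"
          using Zmm r d i jS unfolding max_def by (simp split: if_splits)
        finally show ?thesis using True by simp
      next
        case jnS: False
        with jm have jle: "j \<le> m" by simp
        then obtain D where mD: "m = j + D" by (metis le_add_diff_inverse)
        have Z1: "Z m j' = X (m+1) j + Mw (dl X) (Suc (Suc D)) j' - Mw (dl X) (Suc D) j"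
          using IH[of m j'] mD jj j'1 by (simp add: Suc_diff_le)
        have Z2: "Z m j = X (m+1) (j+1) + Mw (dl X) (Suc D) j - Mw (dl X) D (j+1)"
          using IH[of m j] mD jj j'1 by simp
        have r1: "Mw (dl X) (Suc (Suc D)) j = max (Mw (dl X) (Suc (Suc D)) j') (dl X (Suc (Suc D)) j + Mw (dl X) (Suc D) j)"
          using Mw_Suc[of j' "dl X" "Suc D"] jj j'1 by simp
        have r2: "Mw (dl X) (Suc D) (j+1) = max (Mw (dl X) (Suc D) j) (dl X (Suc D) (j+1) + Mw (dl X) D (j+1))"
          using Mw_Suc[of j "dl X" D] j1 by simp
        have d1: "dl X (Suc (Suc D)) j = X (m+2) j - X (m+1) j" using mD by (simp add: dl_def)
        have d2: "dl X (Suc D) (j+1) = X (m+2) (j+1) - X (m+1) (j+1)" using mD by (simp add: dl_def)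
        have "omega_op (Suc m) X i j = max (X (m+2) j) (Z m j') + min (X (m+2) (j+1)) (Z m j) - X (m+1) j"
          using v jj jle j'1 by simp
        also have "\<dots> = X (i+1) (j+1) + Mw (dl X) (i - j + 1) j - Mw (dl X) (i - j) (j+1)"
        proof -
          have "i - j + 1 = Suc (Suc D)" "i - j = Suc D" using i mD by auto
          thus ?thesis using Z1 Z2 r1 r2 d1 d2 i unfolding min_def max_def by (simp split: if_splits)
        qed
        finally show ?thesis using True by simp
      qed
    qed
  qed
qed

declare omega_op.simps(2)[simp del]

lemma omega_above: "m < i \<Longrightarrow> omega_op m X i j = X i j"
  by (simp add: omega_formula)

lemma S_aux_above: "m < i \<Longrightarrow> S_aux m X i j = X i j"
proof (induction m arbitrary: X)
  case 0 thus ?case by simp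
next
  case (Suc m)
  have "S_aux (Suc m) X i j = S_aux m (omega_op (Suc m) X) i j" by (simp del: S_aux.simps add: S_aux.simps(2))
  also have "\<dots> = omega_op (Suc m) X i j" using Suc by simp
  also have "\<dots> = X i j" using Suc.prems by (simp add: omega_above)
  finally show ?case .
qed

lemma PM_cong:
  "(\<And>i a. 1 \<le> i \<Longrightarrow> i \<le> r \<Longrightarrow> 1 \<le> a \<Longrightarrow> a + i \<le> c + 1 \<Longrightarrow> w (m+i) a = w' (m+i) a)
   \<Longrightarrow> PM w m r c = PM w' m r c"
proof (induction r arbitrary: m c)
  case 0 thus ?case by simp
next
  case (Suc r)
  have e1: "PM w m (Suc r) c = MR (\<lambda>a. w (Suc m) a + PM w (Suc m) r (a - 1)) (Suc r) c" by simp
  have e2: "PM w' m (Suc r) c = MR (\<lambda>a. w' (Suc m) a + PM w' (Suc m) r (a - 1)) (Suc r) c" by simp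
  show ?case unfolding e1 e2
  proof (rule MR_cong)
    fix a assume a: "Suc r \<le> a" "a \<le> c"
    have "w (Suc m) a = w' (Suc m) a" using Suc.prems[of 1 a] a by simp
    moreover have "PM w (Suc m) r (a - 1) = PM w' (Suc m) r (a - 1)"
    proof (rule Suc.IH)
      fix i a' assume h: "1 \<le> i" "i \<le> r" "1 \<le> a'" "a' + i \<le> a - 1 + 1"
      have "w (m + Suc i) a' = w' (m + Suc i) a'" using Suc.prems[of "Suc i" a'] h a by simp
      thus "w (Suc m + i) a' = w' (Suc m + i) a'" by simp
    qed
    ultimately show "w (Suc m) a + PM w (Suc m) r (a - 1) = w' (Suc m) a + PM w' (Suc m) r (a - 1)"
      by simp
  qed
qed

lemma dl_omega: "1 \<le> i \<Longrightarrow> 1 \<le> b \<Longrightarrow> b + i \<le> m \<Longrightarrow> dl (omega_op m X) i b = dT (dl X) i b"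
proof -
  assume h: "1 \<le> i" "1 \<le> b" "b + i \<le> m"
  then obtain i' where i: "i = Suc i'" by (cases i) auto
  have t1: "omega_op m X (b+i) b = X (b+i+1) (b+1) + Mw (dl X) (i+1) b - Mw (dl X) i (b+1)"
    using h by (simp add: omega_formula)
  have t2: "omega_op m X (b+i-1) b = X (b+i) (b+1) + Mw (dl X) i b - Mw (dl X) i' (b+1)"
    using h i by (simp add: omega_formula)
  show ?thesis using t1 t2 i unfolding dl_def dT_def by simp
qed

lemma S_formula:
  "1 \<le> k \<Longrightarrow> k \<le> n \<Longrightarrow> S_aux (n - 1) X k k = X n n + PM (dl X) 0 (n - k) (n - 1)"
proof (induction n arbitrary: X k)
  case 0 thus ?case by simp
next
  case (Suc n)
  show ?case
  proof (cases "k = Suc n")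
    case True
    thus ?thesis by (simp add: S_aux_above)
  next
    case False
    with Suc.prems have kn: "k \<le> n" and k1: "1 \<le> k" by auto
    then obtain n' where n: "n = Suc n'" by (cases n) auto
    define T where "T = omega_op n X"
    have "S_aux (Suc n - 1) X k k = S_aux (n - 1) T k k" using n by (simp add: T_def)
    also have "\<dots> = T n n + PM (dl T) 0 (n - k) (n - 1)" using Suc.IH kn k1 by blast
    also have "T n n = X (Suc n) (Suc n) + Mw (dl X) 1 n"
      using n by (simp add: T_def omega_formula)
    also have "PM (dl T) 0 (n - k) (n - 1) = PM (dT (dl X)) 0 (n - k) (n - 1)"
    proof (rule PM_cong)
      fix i a assume h: "1 \<le> i" "i \<le> n - k" "1 \<le> a" "a + i \<le> n - 1 + 1"
      show "dl T (0 + i) a = dT (dl X) (0 + i) a"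
        unfolding T_def using dl_omega[of i a n X] h n by simp
    qed
    also have "X (Suc n) (Suc n) + Mw (dl X) 1 n + PM (dT (dl X)) 0 (n - k) (n - 1)
        = X (Suc n) (Suc n) + PM (dl X) 0 (Suc (n - k)) n"
      using lemmaA[of "n - k" n "dl X"] kn k1 by simp
    finally show ?thesis using kn by (simp add: Suc_diff_le)
  qed
qed

lemma GT_D1: "GT_triangle n Z \<Longrightarrow> in_tri n i j \<Longrightarrow> 1 \<le> Z i j"
  unfolding GT_triangle_def by blast

lemma GT_D2: "GT_triangle n Z \<Longrightarrow> 1 \<le> j \<Longrightarrow> j \<le> i \<Longrightarrow> i + 1 \<le> n \<Longrightarrow>
   Z (i+1) j \<le> Z i j \<and> Z i j \<le> Z (i+1) (j+1)"
  unfolding GT_triangle_def by blast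

lemma s_op_bounds:
  assumes G: "GT_triangle n Z" and k: "1 \<le> k" "k + 1 \<le> n" and j: "1 \<le> j" "j \<le> k"
  shows "Z (k+1) j \<le> s_op k Z k j \<and> s_op k Z k j \<le> Z (k+1) (j+1)
    \<and> (2 \<le> j \<longrightarrow> Z (k-1) (j-1) \<le> s_op k Z k j)
    \<and> (j + 1 \<le> k \<longrightarrow> s_op k Z k j \<le> Z (k-1) j)"
proof -
  have g12: "Z (k+1) j \<le> Z k j \<and> Z k j \<le> Z (k+1) (j+1)" using GT_D2[OF G j(1) j(2) k(2)] .
  have g3: "2 \<le> j \<Longrightarrow> Z (k-1) (j-1) \<le> Z k j"
  proof -
    assume "2 \<le> j"
    hence "Z (k-1) (j-1) \<le> Z (k-1+1) (j-1+1)" using GT_D2[OF G, of "j-1" "k-1"] j k by simp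
    thus ?thesis using \<open>2 \<le> j\<close> j k by simp
  qed
  have g4: "j + 1 \<le> k \<Longrightarrow> Z k j \<le> Z (k-1) j"
  proof -
    assume "j + 1 \<le> k"
    hence "Z (k-1+1) j \<le> Z (k-1) j" using GT_D2[OF G, of j "k-1"] j k by simp
    thus ?thesis using \<open>j + 1 \<le> k\<close> by simp
  qed
  have v: "s_op k Z k j = (if 2 \<le> j then max (Z (k+1) j) (Z (k-1) (j-1)) else Z (k+1) j)
       + (if j + 1 \<le> k then min (Z (k+1) (j+1)) (Z (k-1) j) else Z (k+1) (j+1)) - Z k j"
    unfolding s_op_def using j by simp
  show ?thesis using v g12 g3 g4 by (auto simp: max_def min_def)
qed

lemma s_op_other: "i \<noteq> k \<Longrightarrow> s_op k Z i j = Z i j"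
  by (simp add: s_op_def)

lemma s_op_GT:
  assumes G: "GT_triangle n Z" and k: "1 \<le> k" "k + 1 \<le> n"
  shows "GT_triangle n (s_op k Z)"
  unfolding GT_triangle_def
proof (rule conjI; intro allI impI)
  fix i j assume t: "in_tri n i j"
  show "1 \<le> s_op k Z i j"
  proof (cases "i = k")
    case True
    have "1 \<le> Z (k+1) j" using GT_D1[OF G] t True k by (simp add: in_tri_def)
    thus ?thesis using s_op_bounds[OF G k, of j] t True by (simp add: in_tri_def)
  next
    case False thus ?thesis using GT_D1[OF G t] by (simp add: s_op_def)
  qed
next
  fix i j assume h: "1 \<le> j \<and> j \<le> i \<and> i + 1 \<le> n"
  show "s_op k Z (i+1) j \<le> s_op k Z i j \<and> s_op k Z i j \<le> s_op k Z (i+1) (j+1)"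
  proof (cases "i = k")
    case True
    thus ?thesis using s_op_bounds[OF G k, of j] h by (simp add: s_op_other)
  next
    case ik: False
    show ?thesis
    proof (cases "i + 1 = k")
      case True
      have a: "s_op k Z (i+1) j \<le> Z (k-1) j" using s_op_bounds[OF G k, of j] h True by simp
      have b: "Z (k-1) j \<le> s_op k Z (i+1) (j+1)" using s_op_bounds[OF G k, of "j+1"] h True by simp
      have c: "s_op k Z i j = Z i j" using ik by (simp add: s_op_def)
      have d: "k - 1 = i" using True by simp
      show ?thesis using a b c True unfolding d by simp
    next
      case False
      thus ?thesis using GT_D2[OF G, of j i] h ik by (simp add: s_op_def)
    qed
  qed
qed

lemma omega_GT: "GT_triangle n X \<Longrightarrow> m + 1 \<le> n \<Longrightarrow> GT_triangle n (omega_op m X)"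
proof (induction m)
  case 0 thus ?case by simp
next
  case (Suc m)
  have "GT_triangle n (omega_op m X)" using Suc by simp
  from s_op_GT[OF this, of "Suc m"] Suc.prems show ?case by (simp add: omega_op.simps(2))
qed

lemma S_aux_GT: "GT_triangle n X \<Longrightarrow> m + 1 \<le> n \<Longrightarrow> GT_triangle n (S_aux m X)"
proof (induction m arbitrary: X)
  case 0 thus ?case by simp
next
  case (Suc m)
  have "GT_triangle n (omega_op (Suc m) X)" using omega_GT Suc.prems by blast
  thus ?case using Suc by simp
qed

lemma S_op_GT: "GT_triangle n X \<Longrightarrow> GT_triangle n (S_op n X)"
proof (cases n)
  case 0
  show ?thesis unfolding 0 GT_triangle_def in_tri_def by simp
next
  case (Suc n')
  assume "GT_triangle n X"
  thus ?thesis unfolding S_op_def using S_aux_GT[of n X "n - 1"] Suc by simp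
qed

definition chain :: "nat \<Rightarrow> nat \<Rightarrow> (nat \<Rightarrow> nat) \<Rightarrow> bool" where
  "chain r c a \<longleftrightarrow> (\<forall>i<r. r \<le> a i + i \<and> a i + i \<le> c) \<and> (\<forall>i. Suc i < r \<longrightarrow> a (Suc i) < a i)"

lemma chain_gap: "chain r c a \<Longrightarrow> i < r \<Longrightarrow> a i + i \<le> a 0"
proof (induction i)
  case 0 thus ?case by simp
next
  case (Suc i)
  hence "a (Suc i) < a i" unfolding chain_def by blast
  thus ?case using Suc by simp
qed

lemma chain_tail: "chain (Suc r) c a \<Longrightarrow> chain r (a 0 - 1) (\<lambda>i. a (Suc i))"
proof -
  assume ch: "chain (Suc r) c a"
  have "\<forall>i<r. r \<le> a (Suc i) + i \<and> a (Suc i) + i \<le> a 0 - 1"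
  proof (intro allI impI conjI)
    fix i assume i: "i < r"
    show "r \<le> a (Suc i) + i" using ch i unfolding chain_def by force
    show "a (Suc i) + i \<le> a 0 - 1" using chain_gap[OF ch, of "Suc i"] i by simp
  qed
  moreover have "\<forall>i. Suc i < r \<longrightarrow> a (Suc (Suc i)) < a (Suc i)" using ch unfolding chain_def by simp
  ultimately show ?thesis unfolding chain_def by simp
qed

lemma C1: "chain r c a \<Longrightarrow> (\<Sum>i<r. w (m + Suc i) (a i)) \<le> PM w m r c"
proof (induction r arbitrary: m c a)
  case 0 thus ?case by simp
next
  case (Suc r)
  have a0: "Suc r \<le> a 0" "a 0 \<le> c" using Suc.prems unfolding chain_def by auto
  have "(\<Sum>i<Suc r. w (m + Suc i) (a i)) = w (Suc m) (a 0) + (\<Sum>i<r. w (Suc m + Suc i) (a (Suc i)))"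
    by (simp only: sum.lessThan_Suc_shift) simp
  also have "\<dots> \<le> w (Suc m) (a 0) + PM w (Suc m) r (a 0 - 1)"
    using Suc.IH[OF chain_tail[OF Suc.prems], of "Suc m"] by simp
  also have "\<dots> \<le> PM w m (Suc r) c"
    using MR_ge[of "Suc r" "a 0" c "\<lambda>a. w (Suc m) a + PM w (Suc m) r (a - 1)"] a0 by simp
  finally show ?case .
qed

lemma C2: "r \<le> c \<Longrightarrow> \<exists>a. chain r c a \<and> (\<Sum>i<r. w (m + Suc i) (a i)) = PM w m r c"
proof (induction r arbitrary: m c)
  case 0 thus ?case by (simp add: chain_def)
next
  case (Suc r)
  obtain a0 where a0: "Suc r \<le> a0" "a0 \<le> c"
    and e: "PM w m (Suc r) c = w (Suc m) a0 + PM w (Suc m) r (a0 - 1)"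
    using MR_ex[of "Suc r" c "\<lambda>a. w (Suc m) a + PM w (Suc m) r (a - 1)"] Suc.prems by auto
  have "r \<le> a0 - 1" using a0 by simp
  then obtain a' where ch: "chain r (a0 - 1) a'" and s: "(\<Sum>i<r. w (Suc m + Suc i) (a' i)) = PM w (Suc m) r (a0 - 1)"
    using Suc.IH[of "a0 - 1" "Suc m"] by blast
  define a where "a = case_nat a0 a'"
  have "chain (Suc r) c a"
    unfolding chain_def
  proof (intro conjI allI impI)
    fix i assume i: "i < Suc r"
    show "Suc r \<le> a i + i"
      using i a0 ch unfolding a_def chain_def by (cases i) auto
    show "a i + i \<le> c"
      using i a0 ch unfolding a_def chain_def by (cases i) auto
  next
    fix i assume i: "Suc i < Suc r"
    show "a (Suc i) < a i"
    proof (cases i)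
      case 0 thus ?thesis using i a0 ch unfolding a_def chain_def by auto
    next
      case (Suc i') thus ?thesis using i ch unfolding a_def chain_def by auto
    qed
  qed
  moreover have "(\<Sum>i<Suc r. w (m + Suc i) (a i)) = PM w m (Suc r) c"
    using s e by (simp only: sum.lessThan_Suc_shift) (simp add: a_def)
  ultimately show ?case by blast
qed

lemma tele:
  "Z n n + (\<Sum>i<r. dl Z (Suc i) (a i))
   = (\<Sum>i<r. Z (case_nat n a i + i) (case_nat n a i) - Z (case_nat n a (Suc i) + i) (case_nat n a (Suc i)))
     + Z (case_nat n a r + r) (case_nat n a r)"
proof (induction r)
  case 0 thus ?case by simp
next
  case (Suc r)
  show ?case using Suc by (simp add: dl_def)
qed

lemma cmp:
  assumes ch: "chain r (n - 1) a" and n1: "1 \<le> n"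
    and inc: "\<And>i c c'. i < r \<Longrightarrow> 1 \<le> c' \<Longrightarrow> c' < c \<Longrightarrow> c + i \<le> n \<Longrightarrow>
        Y (c+i) c - Y (c'+i) c' \<le> X (c+i) c - X (c'+i) c'"
    and last: "\<And>c. 1 \<le> c \<Longrightarrow> c + r \<le> n \<Longrightarrow> Y (c+r) c \<le> X (c+r) c"
  shows "Y n n + (\<Sum>i<r. dl Y (Suc i) (a i)) \<le> X n n + (\<Sum>i<r. dl X (Suc i) (a i))"
proof -
  let ?A = "case_nat n a"
  have Ai: "\<And>i. i < r \<Longrightarrow> 1 \<le> ?A (Suc i) \<and> ?A (Suc i) < ?A i \<and> ?A i + i \<le> n"
  proof -
    fix i assume i: "i < r"
    have "r \<le> a i + i" "a i + i \<le> n - 1" using ch i unfolding chain_def by auto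
    hence "1 \<le> a i" using i by linarith
    moreover have "a i < ?A i \<and> ?A i + i \<le> n"
    proof (cases i)
      case 0 thus ?thesis using \<open>a i + i \<le> n - 1\<close> n1 by simp
    next
      case (Suc i')
      have "a i < a i'" using ch i Suc unfolding chain_def by auto
      moreover have "a i' + i' \<le> n - 1" using ch i Suc unfolding chain_def by auto
      ultimately show ?thesis using Suc n1 by simp
    qed
    ultimately show "1 \<le> ?A (Suc i) \<and> ?A (Suc i) < ?A i \<and> ?A i + i \<le> n" by simp
  qed
  have Ar: "1 \<le> ?A r \<and> ?A r + r \<le> n"
  proof (cases r)
    case 0 thus ?thesis using n1 by simp
  next
    case (Suc r')
    have "r \<le> a r' + r'" "a r' + r' \<le> n - 1" using ch Suc unfolding chain_def by auto
    thus ?thesis using Suc n1 by simp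
  qed
  have "(\<Sum>i<r. Y (?A i + i) (?A i) - Y (?A (Suc i) + i) (?A (Suc i)))
     \<le> (\<Sum>i<r. X (?A i + i) (?A i) - X (?A (Suc i) + i) (?A (Suc i)))"
    by (rule sum_mono) (use inc Ai in auto)
  moreover have "Y (?A r + r) (?A r) \<le> X (?A r + r) (?A r)" using last Ar by blast
  ultimately show ?thesis unfolding tele by linarith
qed

lemma diag_mono:
  assumes G: "GT_triangle n X"
  shows "1 \<le> c' \<Longrightarrow> c' \<le> c \<Longrightarrow> c + i \<le> n \<Longrightarrow> X (c'+i) c' \<le> X (c+i) c"
proof (induction c)
  case 0 thus ?case by simp
next
  case (Suc c)
  show ?case
  proof (cases "c' = Suc c")
    case True thus ?thesis by simp
  next
    case False
    hence h: "c' \<le> c" "1 \<le> c" using Suc.prems by auto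
    have "X (c+i) c \<le> X (c+i+1) (c+1)" using GT_D2[OF G, of c "c+i"] Suc.prems h by simp
    thus ?thesis using Suc.IH h Suc.prems by simp
  qed
qed

lemma transfer:
  assumes GX: "GOGAm_triangle n X" and GY: "GT_triangle n Y"
    and inc: "\<And>i c c'. 1 \<le> c' \<Longrightarrow> c' < c \<Longrightarrow> c + i \<le> n \<Longrightarrow>
        Y (c+i) c - Y (c'+i) c' \<le> X (c+i) c - X (c'+i) c'"
    and last: "\<And>i c. 1 \<le> c \<Longrightarrow> c + i \<le> n \<Longrightarrow> Y (c+i) c \<le> X (c+i) c"
  shows "GOGAm_triangle n Y"
  unfolding GOGAm_triangle_def Magog_triangle_def
proof (intro conjI allI impI)
  show "GT_triangle n Y" by (rule GY)
  show "GT_triangle n (S_op n Y)" by (rule S_op_GT[OF GY])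
  fix k assume k: "1 \<le> k \<and> k \<le> n"
  define r where "r = n - k"
  have r: "r \<le> n - 1" using k unfolding r_def by (simp add: diff_le_mono2)
  obtain a where ch: "chain r (n - 1) a"
    and sY: "(\<Sum>i<r. dl Y (0 + Suc i) (a i)) = PM (dl Y) 0 r (n - 1)"
    using C2[OF r, of "dl Y" 0] by blast
  have "S_op n Y k k = Y n n + PM (dl Y) 0 r (n - 1)"
    unfolding S_op_def r_def using S_formula k by blast
  also have "\<dots> = Y n n + (\<Sum>i<r. dl Y (Suc i) (a i))" using sY by simp
  also have "\<dots> \<le> X n n + (\<Sum>i<r. dl X (Suc i) (a i))"
    by (rule cmp[OF ch]) (use k inc last in auto)
  also have "\<dots> \<le> X n n + PM (dl X) 0 r (n - 1)" using C1[OF ch, of "dl X" 0] by simp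
  also have "\<dots> = S_op n X k k"
    unfolding S_op_def r_def using S_formula k by simp
  also have "\<dots> \<le> int k" using GX k unfolding GOGAm_triangle_def Magog_triangle_def by blast
  finally show "S_op n Y k k \<le> int k" .
qed

lemma part_i:
  assumes GX: "GOGAm_triangle n X" and k: "1 \<le> k" "k \<le> n"
  shows "GOGAm_triangle n (\<lambda>i j. if 1 \<le> j \<and> j + k \<le> i \<and> i \<le> n then 1 else X i j)"
  (is "GOGAm_triangle n ?Y")
proof -
  have G: "GT_triangle n X" using GX unfolding GOGAm_triangle_def by blast
  have GY: "GT_triangle n ?Y"
    unfolding GT_triangle_def
  proof (rule conjI; intro allI impI)
    fix i j assume t: "in_tri n i j"
    show "1 \<le> ?Y i j" using GT_D1[OF G t] by simp
  next
    fix i j assume h: "1 \<le> j \<and> j \<le> i \<and> i + 1 \<le> n"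
    have x: "X (i+1) j \<le> X i j \<and> X i j \<le> X (i+1) (j+1)" using GT_D2[OF G] h by blast
    have p: "1 \<le> X i j" using GT_D1[OF G, of i j] h by (simp add: in_tri_def)
    show "?Y (i+1) j \<le> ?Y i j \<and> ?Y i j \<le> ?Y (i+1) (j+1)"
      using x p h by auto
  qed
  show ?thesis
  proof (rule transfer[OF GX GY])
    fix i c c' :: nat assume h: "1 \<le> c'" "c' < c" "c + i \<le> n"
    have dm: "X (c'+i) c' \<le> X (c+i) c" using diag_mono[OF G, of c' c i] h by simp
    show "?Y (c+i) c - ?Y (c'+i) c' \<le> X (c+i) c - X (c'+i) c'"
      using h dm by auto
  next
    fix i c :: nat assume h: "1 \<le> c" "c + i \<le> n"
    have "1 \<le> X (c+i) c" using GT_D1[OF G, of "c+i" c] h by (simp add: in_tri_def)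
    thus "?Y (c+i) c \<le> X (c+i) c" by simp
  qed
qed

lemma mod_iff:
  fixes k m n a b :: nat
  assumes "k \<le> m" "m \<le> n"
  shows "(\<exists>l. 1 \<le> l \<and> l \<le> n - m \<and> a = m + l \<and> b = k + l) \<longleftrightarrow> (m < a \<and> a \<le> n \<and> a + k = b + m)"
proof
  assume "\<exists>l. 1 \<le> l \<and> l \<le> n - m \<and> a = m + l \<and> b = k + l"
  then obtain l where l: "1 \<le> l" "l \<le> n - m" "a = m + l" "b = k + l" by blast
  show "m < a \<and> a \<le> n \<and> a + k = b + m" using l assms by linarith
next
  assume h: "m < a \<and> a \<le> n \<and> a + k = b + m"
  show "\<exists>l. 1 \<le> l \<and> l \<le> n - m \<and> a = m + l \<and> b = k + l"
    by (rule exI[of _ "a - m"]) (use h assms in auto)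
qed

lemma part_ii:
  assumes GX: "GOGAm_triangle n X" and mk: "m \<le> n" "k \<le> m" "1 \<le> k"
    and H: "\<forall>i l. m + 1 \<le> i \<and> i \<le> n \<and> l \<le> n - i \<longrightarrow> X (i+l) (k+l) = X i k"
  shows "GOGAm_triangle n (\<lambda>a b. if (\<exists>l. 1 \<le> l \<and> l \<le> n - m \<and> a = m + l \<and> b = k + l)
                                     then X m k else X a b)"
proof -
  have G: "GT_triangle n X" using GX unfolding GOGAm_triangle_def by blast
  define Y where "Y a b = (if m < a \<and> a \<le> n \<and> a + k = b + m then X m k else X a b)" for a b
  have YY: "(\<lambda>a b. if (\<exists>l. 1 \<le> l \<and> l \<le> n - m \<and> a = m + l \<and> b = k + l) then X m k else X a b) = Y"
    unfolding Y_def using mod_iff[OF mk(2) mk(1)] by (intro ext) simp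
  have vpos: "1 \<le> X m k" using GT_D1[OF G, of m k] mk by (simp add: in_tri_def)
  have dmk: "\<And>c. k \<le> c \<Longrightarrow> c + (m - k) \<le> n \<Longrightarrow> X m k \<le> X (c + (m - k)) c"
    using diag_mono[OF G, of k _ "m - k"] mk by simp
  have GY: "GT_triangle n Y"
    unfolding GT_triangle_def
  proof (rule conjI; intro allI impI)
    fix i j assume t: "in_tri n i j"
    show "1 \<le> Y i j" using GT_D1[OF G t] vpos by (simp add: Y_def)
  next
    fix i j assume h: "1 \<le> j \<and> j \<le> i \<and> i + 1 \<le> n"
    have x: "X (i+1) j \<le> X i j \<and> X i j \<le> X (i+1) (j+1)" using GT_D2[OF G] h by blast
    show "Y (i+1) j \<le> Y i j \<and> Y i j \<le> Y (i+1) (j+1)"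
    proof (cases "i + k = j + m")
      case d: True
      show ?thesis
      proof (cases "m < i")
        case True
        have pre: "m + 1 \<le> m + 1 \<and> m + 1 \<le> n \<and> i - m \<le> n - (m + 1)" using h True by linarith
        have "X (m + 1 + (i - m)) (k + (i - m)) = X (m+1) k"
          using H pre by blast
        moreover have "m + 1 + (i - m) = i + 1" "k + (i - m) = j" using True d by auto
        ultimately have e: "X (i+1) j = X (m+1) k" by simp
        have "X (m+1) k \<le> X m k" using GT_D2[OF G, of k m] mk h True by simp
        thus ?thesis using e d True h unfolding Y_def by auto
      next
        case False
        show ?thesis
        proof (cases "i = m")
          case True
          hence "j = k" using d by simp
          thus ?thesis using x True d h unfolding Y_def by auto
        next
          case False
          thus ?thesis using x d h \<open>\<not> m < i\<close> unfolding Y_def by auto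
        qed
      qed
    next
      case nd: False
      show ?thesis
      proof (cases "i + 1 + k = j + m \<and> m < i + 1")
        case True
        have "k \<le> j" "j + (m - k) \<le> n" using True h mk by linarith+
        hence "X m k \<le> X (j + (m - k)) j" using dmk[of j] by simp
        moreover have "j + (m - k) = i + 1" using True mk by linarith
        ultimately have "X m k \<le> X (i+1) j" by simp
        thus ?thesis using x True nd h unfolding Y_def by auto
      next
        case False
        thus ?thesis using x nd h unfolding Y_def by auto
      qed
    qed
  qed
  have "GOGAm_triangle n Y"
  proof (rule transfer[OF GX GY])
    fix i c c' :: nat assume h: "1 \<le> c'" "c' < c" "c + i \<le> n"
    have dm: "X (c'+i) c' \<le> X (c+i) c" using diag_mono[OF G, of c' c i] h by simp
    show "Y (c+i) c - Y (c'+i) c' \<le> X (c+i) c - X (c'+i) c'"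
    proof (cases "i + k = m")
      case False thus ?thesis unfolding Y_def by auto
    next
      case True
      hence im: "i = m - k" by simp
      have Yc: "\<And>c. 1 \<le> c \<Longrightarrow> c + i \<le> n \<Longrightarrow> Y (c+i) c = (if k < c then X m k else X (c+i) c)"
        unfolding Y_def using True by auto
      have Yc': "Y (c'+i) c' = (if k < c' then X m k else X (c'+i) c')" using Yc h by simp
      have Yc1: "Y (c+i) c = (if k < c then X m k else X (c+i) c)" using Yc h by simp
      show ?thesis
      proof (cases "k < c'")
        case True thus ?thesis using Yc' Yc1 h dm by simp
      next
        case False
        show ?thesis
        proof (cases "k < c")
          case True
          have "X m k \<le> X (c+i) c" using dmk[of c] True h im by simp
          thus ?thesis using Yc' Yc1 True False by simp
        next
          case False thus ?thesis using Yc' Yc1 \<open>\<not> k < c'\<close> by simp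
        qed
      qed
    qed
  next
    fix i c :: nat assume h: "1 \<le> c" "c + i \<le> n"
    show "Y (c+i) c \<le> X (c+i) c"
    proof (cases "m < c + i \<and> c + i + k = c + m")
      case True
      hence "i = m - k" "k \<le> c" by auto
      thus ?thesis using dmk[of c] h True unfolding Y_def by simp
    next
      case False thus ?thesis unfolding Y_def by auto
    qed
  qed
  thus ?thesis using YY by simp
qed

theorem mainTheorem8:
  fixes n :: nat and X :: "nat \<Rightarrow> nat \<Rightarrow> int"
  assumes "GOGAm_triangle n X"
  shows "(\<forall>k. 1 \<le> k \<and> k \<le> n \<longrightarrow>
            GOGAm_triangle n (\<lambda>i j. if 1 \<le> j \<and> j + k \<le> i \<and> i \<le> n then 1 else X i j))
       \<and> (\<forall>m k. n \<ge> m \<and> m \<ge> k \<and> k \<ge> 1 \<and>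
            (\<forall>i l. m + 1 \<le> i \<and> i \<le> n \<and> l \<le> n - i \<longrightarrow> X (i+l) (k+l) = X i k) \<longrightarrow>
            GOGAm_triangle n (\<lambda>a b. if (\<exists>l. 1 \<le> l \<and> l \<le> n - m \<and> a = m + l \<and> b = k + l)
                                     then X m k else X a b))"
  using part_i[OF assms] part_ii[OF assms] by blast

end
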